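(* Let $\alpha\in\mathbb R$ be badly approximable, $k\in\mathbb Z\setminus\{0\}$ and $l\in\mathbb N$. Then for any $\epsilon>0$ there exists a constant $C>0$ depending only on $\alpha$ and $\epsilon$ such that for all integers $0\le M<N$, $$\left|\sum_{n=M+1}^N e^{2\pi i k\alpha n^2/l}\right|\le C(N-M)^{1/2+\epsilon}|k|^{1/2+\epsilon}l^{1/2}.$$
   Context: A real number $\alpha$ is badly approximable if the partial quotients in its continued fraction expansion are bounded. *)

theory Defs
  imports Complex_Main
begin

text \<open>Complete quotients of the (regular) continued fraction expansion:
  alpha_0 = alpha, alpha_(n+1) = 1 / frac(alpha_n).  For irrational alpha
  frac(alpha_n) is never 0, so this is the usual expansion.\<close>
fun cf_rem :: "real \<Rightarrow> nat \<Rightarrow> real" where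
  "cf_rem x 0 = x"
| "cf_rem x (Suc n) = 1 / frac (cf_rem x n)"

definition cf_quot :: "real \<Rightarrow> nat \<Rightarrow> int" where
  "cf_quot x n = \<lfloor>cf_rem x n\<rfloor>"

definition badly_approximable :: "real \<Rightarrow> bool" where
  "badly_approximable x \<longleftrightarrow> x \<notin> \<rat> \<and> (\<exists>B. \<forall>n. \<bar>cf_quot x n\<bar> \<le> B)"

end

theory Submission
  imports Defs
begin


lemma dioph_orbit:
  fixes x :: "nat \<Rightarrow> real" and a :: "nat \<Rightarrow> int" and c :: real
  assumes c: "c > 0" "c \<le> 1/4"
    and xpos: "\<And>n. 0 < x n" and xlo: "\<And>n. 2*c \<le> x n" and xhi: "\<And>n. 2*c \<le> 1 - x n"
    and rec: "\<And>n. 1 / x n = of_int (a n) + x (Suc n)"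
  shows "q \<ge> 1 \<Longrightarrow> real q * \<bar>real q * x n - of_int p\<bar> \<ge> c * (1 + 1 / real q)"
proof (induction q arbitrary: n p rule: less_induct)
  case (less q)
  define \<eta> where "\<eta> = real q * x n - of_int p"
  have q1: "real q \<ge> 1" using less.prems by simp
  have cq: "c * (1 + 1 / real q) \<le> 2 * c" using c q1 by (simp add: field_simps)
  consider "\<bar>\<eta>\<bar> > 1 / (2 * real q)" | "p \<le> 0" | "p \<ge> int q"
    | "\<bar>\<eta>\<bar> \<le> 1 / (2 * real q)" "1 \<le> p" "p < int q" by linarith
  then show ?case
  proof cases
    case 1
    then have "real q * \<bar>\<eta>\<bar> > 1/2" using q1 by (simp add: field_simps)
    then show ?thesis using cq c unfolding \<eta>_def by linarith
  next
    case 2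
    have "\<bar>\<eta>\<bar> \<ge> x n" unfolding \<eta>_def using 2 q1 xpos[of n]
      by (smt (verit, best) mult_le_cancel_right1 of_int_le_0_iff)
    then have "real q * \<bar>\<eta>\<bar> \<ge> x n" using q1 by (smt (verit) mult_le_cancel_right1)
    then show ?thesis using cq xlo[of n] unfolding \<eta>_def by linarith
  next
    case 3
    have "of_int p \<ge> real q" using 3 by simp
    then have "\<bar>\<eta>\<bar> \<ge> real q * (1 - x n)" unfolding \<eta>_def by (simp add: algebra_simps)
    moreover have "real q * (1 - x n) \<ge> 1 - x n" using q1 xhi[of n] c
      by (smt (verit) mult_le_cancel_right1)
    ultimately have "real q * \<bar>\<eta>\<bar> \<ge> 1 - x n" using q1
      by (smt (verit) mult_le_cancel_right1)
    then show ?thesis using cq xhi[of n] unfolding \<eta>_def by linarith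
  next
    case 4
    define p' where "p' = int q - a n * p"
    define \<eta>' where "\<eta>' = real_of_int p * x (Suc n) - of_int p'"
    have IH: "real (nat p) * \<bar>real (nat p) * x (Suc n) - of_int p'\<bar> \<ge> c * (1 + 1 / real (nat p))"
      using less.IH[of "nat p" "Suc n" p'] 4 by simp
    have pr: "real (nat p) = of_int p" using 4 by simp
    have IH': "of_int p * \<bar>\<eta>'\<bar> \<ge> c * (1 + 1 / of_int p)" using IH unfolding pr \<eta>'_def .
    have xs: "x (Suc n) = 1 / x n - of_int (a n)" using rec[of n] by simp
    have eq: "\<eta> = - x n * \<eta>'"
      unfolding \<eta>_def \<eta>'_def xs p'_def using xpos[of n] by (simp add: field_simps)
    have qx: "real q * x n = of_int p + \<eta>" unfolding \<eta>_def by simp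
    have "real q * \<bar>\<eta>\<bar> = (real q * x n) * \<bar>\<eta>'\<bar>" using eq xpos[of n] by (simp add: abs_mult)
    also have "\<dots> = (of_int p + \<eta>) * \<bar>\<eta>'\<bar>" using qx by simp
    also have "\<dots> \<ge> (of_int p - \<bar>\<eta>\<bar>) * \<bar>\<eta>'\<bar>"
      by (intro mult_right_mono) auto
    finally have A: "real q * \<bar>\<eta>\<bar> \<ge> (of_int p - \<bar>\<eta>\<bar>) * \<bar>\<eta>'\<bar>" .
    define P where "P = (of_int p :: real)"
    define Q where "Q = real q"
    have P1: "P \<ge> 1" and PQ: "P + 1 \<le> Q" using 4 unfolding P_def Q_def by simp_all
    have e2: "\<bar>\<eta>\<bar> \<le> 1 / (2 * Q)" using 4 unfolding Q_def by simp
    have B1: "(P - \<bar>\<eta>\<bar>) * \<bar>\<eta>'\<bar> = (1 - \<bar>\<eta>\<bar> / P) * (P * \<bar>\<eta>'\<bar>)" using P1 by (simp add: field_simps)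
    have B2: "(1 - \<bar>\<eta>\<bar> / P) * (P * \<bar>\<eta>'\<bar>) \<ge> (1 - 1 / (2 * Q * P)) * (c * (1 + 1 / P))"
    proof (rule mult_mono)
      show "1 - 1 / (2 * Q * P) \<le> 1 - \<bar>\<eta>\<bar> / P" using e2 P1 PQ
        by (simp add: field_simps)
      show "c * (1 + 1 / P) \<le> P * \<bar>\<eta>'\<bar>" using IH' unfolding P_def .
      have "\<bar>\<eta>\<bar> \<le> 1/2" using e2 PQ P1 by (smt (verit) divide_le_eq_1 frac_le)
      then show "0 \<le> 1 - \<bar>\<eta>\<bar> / P" using P1 by (simp add: field_simps)
      show "0 \<le> c * (1 + 1 / P)" using c P1 by simp
    qed
    have B3: "(1 - 1 / (2 * Q * P)) * (c * (1 + 1 / P)) \<ge> c * (1 + 1 / Q)"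
    proof -
      have "(1 - 1 / (2 * Q * P)) * (1 + 1 / P) - (1 + 1 / Q)
          = (2*P*(Q - P) - P - 1) / (2 * Q * P * P)" using P1 PQ by (simp add: field_simps)
      also have "\<dots> \<ge> 0"
      proof -
        have "P * (Q - P) \<ge> P * 1" using P1 PQ by (intro mult_left_mono) auto
        then show ?thesis using P1 PQ by (intro divide_nonneg_pos) (simp_all add: algebra_simps)
      qed
      finally have "0 \<le> c * ((1 - 1 / (2 * Q * P)) * (1 + 1 / P) - (1 + 1 / Q))"
        using c by simp
      then show ?thesis by (simp add: algebra_simps)
    qed
    show ?thesis using A B1 B2 B3 unfolding P_def Q_def \<eta>_def by linarith
  qed
qed



lemma cf_rem_irr: "\<alpha> \<notin> \<rat> \<Longrightarrow> cf_rem \<alpha> n \<notin> \<rat>"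
proof (induction n)
  case 0 then show ?case by simp
next
  case (Suc n)
  show ?case
  proof
    assume "cf_rem \<alpha> (Suc n) \<in> \<rat>"
    then have "1 / frac (cf_rem \<alpha> n) \<in> \<rat>" by simp
    then have "frac (cf_rem \<alpha> n) \<in> \<rat>"
      by (metis Rats_inverse inverse_eq_divide inverse_inverse_eq)
    then have "frac (cf_rem \<alpha> n) + of_int \<lfloor>cf_rem \<alpha> n\<rfloor> \<in> \<rat>" by simp
    then show False using Suc by (simp add: frac_def)
  qed
qed

lemma badly_dioph:
  assumes "badly_approximable \<alpha>"
  shows "\<exists>c>0. \<forall>(q::int) (p::int). q \<noteq> 0 \<longrightarrow> \<bar>real_of_int q\<bar> * \<bar>of_int q * \<alpha> - of_int p\<bar> \<ge> c"
proof -
  from assms obtain B where irr: "\<alpha> \<notin> \<rat>" and B: "\<And>n. \<bar>cf_quot \<alpha> n\<bar> \<le> B"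
    unfolding badly_approximable_def by blast
  define x where "x n = frac (cf_rem \<alpha> n)" for n
  define a where "a n = cf_quot \<alpha> (Suc n)" for n
  have xpos: "0 < x n" for n
  proof -
    have "frac (cf_rem \<alpha> n) \<noteq> 0" using cf_rem_irr[OF irr, of n] 
      by (metis Ints_subset_Rats frac_eq_0_iff subsetD)
    then show ?thesis unfolding x_def using frac_ge_0[of "cf_rem \<alpha> n"] by linarith
  qed
  have xlt1: "x n < 1" for n unfolding x_def by (simp add: frac_lt_1)
  have rec: "1 / x n = of_int (a n) + x (Suc n)" for n
    unfolding x_def a_def cf_quot_def by (simp add: frac_def)
  have ainv: "a n = \<lfloor>1 / x n\<rfloor>" for n unfolding x_def a_def cf_quot_def by simp
  define B' where "B' = max (real_of_int B) 1"
  define m where "m = 1 / (B' + 1)"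
  have B'1: "B' \<ge> 1" unfolding B'_def by simp
  have m: "0 < m" "m \<le> 1/2" unfolding m_def using B'1 by (auto simp: field_simps)
  have xlo: "m < x n" for n
  proof -
    have "1 / x n < of_int (a n) + 1" unfolding ainv by linarith
    also have "of_int (a n) \<le> B'" using B[of "Suc n"] unfolding a_def B'_def by linarith
    finally have "1 / x n < B' + 1" by simp
    then show ?thesis unfolding m_def using xpos[of n] B'1
      by (simp add: field_simps)
  qed
  have xhi: "m / 2 \<le> 1 - x n" for n
  proof -
    have "1 / x n > 1" using xpos[of n] xlt1[of n] by (simp add: field_simps)
    then have "a n \<ge> 1" unfolding ainv by (simp add: le_floor_iff)
    then have "1 / x n \<ge> 1 + m" using rec[of n] xlo[of "Suc n"] by linarith
    then have "x n * (1 + m) \<le> 1" using xpos[of n] by (simp add: field_simps)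
    then have "x n \<le> 1 / (1 + m)" using m by (simp add: field_simps)
    moreover have "1 / (1 + m) \<le> 1 - m / 2" using m by (simp add: field_simps)
    ultimately show ?thesis by linarith
  qed
  define c where "c = m / 4"
  have main: "real q * \<bar>real q * x 0 - of_int p\<bar> \<ge> c * (1 + 1 / real q)" if "q \<ge> 1" for q p
  proof (rule dioph_orbit[of c x a q 0 p])
    show "c > 0" "c \<le> 1/4" unfolding c_def using m by auto
    show "0 < x n" for n by (rule xpos)
    show "2 * c \<le> x n" for n unfolding c_def using xlo[of n] m by simp
    show "2 * c \<le> 1 - x n" for n unfolding c_def using xhi[of n] by simp
    show "1 / x n = of_int (a n) + x (Suc n)" for n by (rule rec)
  qed (rule that)
  show ?thesis
  proof (intro exI[of _ c] conjI allI impI)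
    show "c > 0" unfolding c_def using m by simp
    fix q p :: int assume q0: "q \<noteq> 0"
    have gen: "\<bar>real_of_int q\<bar> * \<bar>of_int q * \<alpha> - of_int p\<bar> \<ge> c" if "q > 0" for q p :: int
    proof -
      have "\<alpha> = of_int \<lfloor>\<alpha>\<rfloor> + x 0" unfolding x_def by (simp add: frac_def)
      then have e: "of_int q * \<alpha> - of_int p = real (nat q) * x 0 - of_int (p - q * \<lfloor>\<alpha>\<rfloor>)"
        using that by (metis (no_types, opaque_lifting) add.commute diff_diff_eq2 distrib_left less_le of_int_diff of_int_mult of_nat_nat)
      have "real (nat q) * \<bar>real (nat q) * x 0 - of_int (p - q * \<lfloor>\<alpha>\<rfloor>)\<bar> \<ge> c * (1 + 1 / real (nat q))"
        using main[of "nat q" "p - q * \<lfloor>\<alpha>\<rfloor>"] that by linarith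
      moreover have "c * (1 + 1 / real (nat q)) \<ge> c" unfolding c_def using m by simp
      ultimately show ?thesis using e that by (simp add: algebra_simps)
    qed
    show "\<bar>real_of_int q\<bar> * \<bar>of_int q * \<alpha> - of_int p\<bar> \<ge> c"
    proof (cases "q > 0")
      case True then show ?thesis using gen by simp
    next
      case False
      then have "-q > 0" using q0 by simp
      from gen[OF this, of "-p"] show ?thesis by (simp add: abs_minus_commute)
    qed
  qed
qed



definition ee :: "real \<Rightarrow> complex" where "ee t = cis (2 * pi * t)"

lemma ee_exp: "exp (2 * pi * \<i> * of_real t) = ee t"
  unfolding ee_def cis_conv_exp by (simp add: mult_ac)

lemma ee_add: "ee (a + b) = ee a * ee b"
  unfolding ee_def by (simp add: cis_mult distrib_left)

lemma norm_ee [simp]: "norm (ee t) = 1" unfolding ee_def by simp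

lemma cnj_ee: "cnj (ee t) = ee (- t)" unfolding ee_def by (simp add: cis_cnj)

lemma ee_mult_cnj: "ee t * cnj (ee t) = 1"
  by (simp add: cnj_ee flip: ee_add) (simp add: ee_def)

lemma ee_int: "ee (of_int m) = 1"
  unfolding ee_def by (simp add: Ints_of_int)

lemma ee_pow: "ee t ^ j = ee (real j * t)"
  unfolding ee_def by (simp add: DeMoivre mult_ac)

lemma sin_ge_cubic:
  fixes t :: real
  assumes "0 \<le> t" shows "t - t^3/6 \<le> sin t"
proof -
  let ?g = "\<lambda>t. sin t - t + t^3/6"
  have "?g 0 \<le> ?g t"
  proof (rule DERIV_nonneg_imp_nondecreasing[OF assms])
    fix x :: real assume "0 \<le> x" "x \<le> t"
    have "DERIV ?g x :> cos x - 1 + x^2/2"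
      by (auto intro!: derivative_eq_intros simp: power2_eq_square)
    moreover have "cos x - 1 + x^2/2 \<ge> 0"
    proof -
      have "cos x = 1 - 2 * sin (x/2) ^ 2" using cos_double_sin[of "x/2"] by simp
      moreover have "sin (x/2) ^ 2 \<le> (x/2)^2"
        using abs_sin_x_le_abs_x[of "x/2"] by (metis abs_ge_zero power2_abs power_mono)
      ultimately show ?thesis by (simp add: power2_eq_square)
    qed
    ultimately show "\<exists>y. DERIV ?g x :> y \<and> y \<ge> 0" by blast
  qed
  then show ?thesis by simp
qed

lemma sin_ge_third:
  fixes t :: real
  assumes "0 \<le> t" "t \<le> 2" shows "t / 3 \<le> sin t"
proof -
  have "t^3/6 \<le> 2 * t / 3"
  proof -
    have "t^2 \<le> 2^2" using power_mono[of t 2 2] assms by simp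
    then have "t^2 \<le> 4" by simp
    then have "t * t^2 \<le> t * 4" using assms by (intro mult_left_mono) auto
    then show ?thesis by (simp add: power3_eq_cube power2_eq_square)
  qed
  then show ?thesis using sin_ge_cubic[OF assms(1)] by linarith
qed

lemma norm_one_minus_cis: "norm (1 - cis \<phi>) = 2 * \<bar>sin (\<phi>/2)\<bar>"
proof -
  have "norm (1 - cis \<phi>) ^ 2 = (1 - cos \<phi>)^2 + (sin \<phi>)^2" by (simp add: cmod_power2)
  also have "\<dots> = 2 - 2 * cos \<phi>" using sin_cos_squared_add[of \<phi>] by (simp add: power2_eq_square algebra_simps)
  also have "\<dots> = (2 * \<bar>sin (\<phi>/2)\<bar>)^2" using cos_double_sin[of "\<phi>/2"] by (simp add: power2_eq_square)
  finally show ?thesis by (rule power2_eq_imp_eq) auto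
qed

lemma geom_bound:
  fixes \<beta> :: real
  assumes d: "d = \<beta> - of_int (round \<beta>)" "d \<noteq> 0"
  shows "norm (\<Sum>j<n. ee (\<beta> * real j)) \<le> 2 / \<bar>d\<bar>"
proof -
  have dh: "\<bar>d\<bar> \<le> 1/2" using d(1) of_int_round_ge[of \<beta>] of_int_round_le[of \<beta>] by linarith
  have zd: "ee \<beta> = ee d"
  proof -
    have "\<beta> = d + of_int (round \<beta>)" using d(1) by simp
    then show ?thesis by (metis ee_add ee_int mult_1_right)
  qed
  have sn: "\<bar>sin (pi * d)\<bar> \<ge> \<bar>d\<bar> / 2"
  proof -
    have "pi * \<bar>d\<bar> \<le> pi * (1/2)" by (intro mult_left_mono) (use dh in auto)
    then have p2: "pi * \<bar>d\<bar> \<le> 2" using pi_less_4 by linarith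
    have "pi * \<bar>d\<bar> / 3 \<le> sin (pi * \<bar>d\<bar>)" by (rule sin_ge_third) (use p2 in auto)
    moreover have "\<bar>d\<bar> / 2 \<le> pi * \<bar>d\<bar> / 3"
    proof -
      have "2 * \<bar>d\<bar> \<le> pi * \<bar>d\<bar>" using pi_ge_two by (intro mult_right_mono) auto
      then show ?thesis by simp
    qed
    moreover have "\<bar>sin (pi * d)\<bar> = sin (pi * \<bar>d\<bar>)"
    proof -
      have s0: "sin (pi * \<bar>d\<bar>) \<ge> 0" using \<open>pi * \<bar>d\<bar> / 3 \<le> sin (pi * \<bar>d\<bar>)\<close>
        using mult_nonneg_nonneg[OF pi_ge_zero abs_ge_zero[of d]] by linarith
      have "sin (pi * d) = sin (pi * \<bar>d\<bar>) \<or> sin (pi * d) = - sin (pi * \<bar>d\<bar>)"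
        by (cases "d \<ge> 0") auto
      then show ?thesis using s0 by auto
    qed
    ultimately show ?thesis by linarith
  qed
  have nz: "norm (1 - ee d) \<ge> \<bar>d\<bar>"
    unfolding ee_def norm_one_minus_cis using sn by simp
  then have ne1: "ee d \<noteq> 1" using d(2) by auto
  have "(\<Sum>j<n. ee (\<beta> * real j)) = (\<Sum>j<n. ee d ^ j)"
  proof (rule sum.cong)
    fix j show "ee (\<beta> * real j) = ee d ^ j" using ee_pow[of \<beta> j] zd by (simp add: mult.commute)
  qed simp
  also have "\<dots> = (1 - ee d ^ n) / (1 - ee d)" using ne1 by (simp add: sum_gp_strict)
  finally have "norm (\<Sum>j<n. ee (\<beta> * real j)) = norm (1 - ee d ^ n) / norm (1 - ee d)"
    by (simp add: norm_divide)
  also have "\<dots> \<le> 2 / \<bar>d\<bar>"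
  proof (rule frac_le)
    show "norm (1 - ee d ^ n) \<le> 2" using norm_triangle_ineq4[of 1 "ee d ^ n"] by (simp add: norm_power)
  qed (use nz d(2) in auto)
  finally show ?thesis by simp
qed



definition wT :: "(nat \<Rightarrow> complex) \<Rightarrow> nat \<Rightarrow> complex" where
  "wT F L = (\<Sum>h\<in>{1..<L}. \<Sum>j<L-h. F (j+h) * cnj (F j))"

lemma wT_Suc: "wT F (Suc L) = wT F L + F L * cnj (\<Sum>i<L. F i)"
proof -
  have "wT F (Suc L) = (\<Sum>h\<in>{1..L}. (\<Sum>j<L-h. F (j+h) * cnj (F j)) + F L * cnj (F (L-h)))"
    unfolding wT_def
  proof (rule sum.cong)
    fix h assume "h \<in> {1..L}"
    then have "Suc L - h = Suc (L - h)" by auto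
    then show "(\<Sum>j<Suc L - h. F (j+h) * cnj (F j)) = (\<Sum>j<L-h. F (j+h) * cnj (F j)) + F L * cnj (F (L-h))"
      using \<open>h \<in> {1..L}\<close> by simp
  qed auto
  also have "\<dots> = (\<Sum>h\<in>{1..L}. \<Sum>j<L-h. F (j+h) * cnj (F j)) + (\<Sum>h\<in>{1..L}. F L * cnj (F (L-h)))"
    by (simp add: sum.distrib)
  also have "(\<Sum>h\<in>{1..L}. \<Sum>j<L-h. F (j+h) * cnj (F j)) = wT F L"
  proof (cases L)
    case 0 then show ?thesis by (simp add: wT_def)
  next
    case (Suc m)
    then have "{1..L} = insert L {1..<L}" by auto
    then show ?thesis unfolding wT_def by simp
  qed
  also have "(\<Sum>h\<in>{1..L}. F L * cnj (F (L-h))) = F L * cnj (\<Sum>i<L. F i)"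
  proof -
    have "(\<Sum>h\<in>{1..L}. cnj (F (L-h))) = (\<Sum>i<L. cnj (F i))"
      by (rule sum.reindex_bij_witness[of _ "\<lambda>i. L - i" "\<lambda>h. L - h"]) auto
    then have "F L * (\<Sum>h\<in>{1..L}. cnj (F (L-h))) = F L * cnj (\<Sum>i<L. F i)" by simp
    then show ?thesis by (simp only: sum_distrib_left)
  qed
  finally show ?thesis .
qed

lemma weyl_id:
  assumes F: "\<And>i. F i * cnj (F i) = 1"
  shows "(\<Sum>i<L. F i) * cnj (\<Sum>i<L. F i) = of_nat L + wT F L + cnj (wT F L)"
proof (induction L)
  case 0 then show ?case by (simp add: wT_def)
next
  case (Suc L)
  let ?S = "\<Sum>i<L. F i"
  have "(\<Sum>i<Suc L. F i) * cnj (\<Sum>i<Suc L. F i) = (?S + F L) * (cnj ?S + cnj (F L))" by simp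
  also have "\<dots> = ?S * cnj ?S + F L * cnj (F L) + F L * cnj ?S + cnj (F L * cnj ?S)"
    by (simp add: algebra_simps)
  also have "\<dots> = of_nat (Suc L) + wT F (Suc L) + cnj (wT F (Suc L))"
    using Suc F[of L] by (simp add: wT_Suc)
  finally show ?case .
qed

lemma weyl_bound:
  assumes F: "\<And>i. F i * cnj (F i) = 1"
  shows "norm (\<Sum>i<L. F i) ^ 2 \<le> real L + 2 * (\<Sum>h\<in>{1..<L}. norm (\<Sum>j<L-h. F (j+h) * cnj (F j)))"
proof -
  let ?S = "\<Sum>i<L. F i"
  have "?S * cnj ?S = of_nat L + wT F L + cnj (wT F L)" by (rule weyl_id) (rule F)
  then have "complex_of_real (norm ?S ^ 2) = of_nat L + wT F L + cnj (wT F L)"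
    by (simp only: complex_norm_square)
  then have "norm ?S ^ 2 = Re (of_nat L + wT F L + cnj (wT F L))"
    by (metis Re_complex_of_real)
  also have "\<dots> = real L + 2 * Re (wT F L)" by simp
  also have "\<dots> \<le> real L + 2 * norm (wT F L)" using complex_Re_le_cmod by simp
  also have "norm (wT F L) \<le> (\<Sum>h\<in>{1..<L}. norm (\<Sum>j<L-h. F (j+h) * cnj (F j)))"
    unfolding wT_def by (rule norm_sum)
  finally show ?thesis by simp
qed



lemma harm_bound: "J \<ge> 1 \<Longrightarrow> (\<Sum>j\<in>{1..J}. 1 / real j) \<le> 1 + ln (real J)"
proof (induction J rule: dec_induct)
  case base then show ?case by simp
next
  case (step J)
  have "1 / real (Suc J) \<le> ln (real (Suc J)) - ln (real J)"
  proof -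
    have "ln (real J / real (Suc J)) \<le> real J / real (Suc J) - 1"
      using step by (intro ln_le_minus_one) auto
    also have "\<dots> = - (1 / real (Suc J))" by (simp add: field_simps)
    finally show ?thesis using step by (simp add: ln_div)
  qed
  then show ?case using step by simp
qed

lemma spacing_sum:
  fixes y :: "nat \<Rightarrow> real" and H :: "nat set" and \<delta> :: real
  assumes fin: "finite H" and \<delta>: "\<delta> > 0"
    and b: "\<And>h. h \<in> H \<Longrightarrow> \<delta> \<le> \<bar>y h\<bar> \<and> \<bar>y h\<bar> \<le> 1/2"
    and sep: "\<And>h h'. h \<in> H \<Longrightarrow> h' \<in> H \<Longrightarrow> h \<noteq> h' \<Longrightarrow> \<delta> \<le> \<bar>y h - y h'\<bar>"
  shows "(\<Sum>h\<in>H. 1 / \<bar>y h\<bar>) \<le> (2 / \<delta>) * (\<Sum>j\<in>{1..nat \<lfloor>1 / (2*\<delta>)\<rfloor>}. 1 / real j)"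
proof -
  define g where "g h = nat \<lfloor>\<bar>y h\<bar> / \<delta>\<rfloor>" for h
  define J where "J = nat \<lfloor>1 / (2*\<delta>)\<rfloor>"
  have gfl: "real (g h) \<le> \<bar>y h\<bar> / \<delta>" "\<bar>y h\<bar> / \<delta> < real (g h) + 1" if "h \<in> H" for h
  proof -
    have "\<bar>y h\<bar> / \<delta> \<ge> 0" using \<delta> by simp
    then show "real (g h) \<le> \<bar>y h\<bar> / \<delta>" "\<bar>y h\<bar> / \<delta> < real (g h) + 1"
      unfolding g_def by linarith+
  qed
  have g1: "g h \<ge> 1" if "h \<in> H" for h
  proof -
    have "\<bar>y h\<bar> / \<delta> \<ge> 1" using b[OF that] \<delta> by simp
    then show ?thesis unfolding g_def by linarith
  qed
  have gJ: "g h \<le> J" if "h \<in> H" for h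
  proof -
    have "\<bar>y h\<bar> / \<delta> \<le> 1 / (2*\<delta>)" using b[OF that] \<delta> by (simp add: field_simps)
    then show ?thesis unfolding g_def J_def by (intro nat_mono floor_mono)
  qed
  have card2: "card {h \<in> H. g h = j} \<le> 2" for j
  proof -
    define A where "A = {h \<in> H. g h = j}"
    define Ap where "Ap = {h \<in> A. y h \<ge> 0}"
    define An where "An = {h \<in> A. y h < 0}"
    have finA: "finite Ap" "finite An" unfolding Ap_def An_def A_def using fin by auto
    have close: "\<bar>y h - y h'\<bar> < \<delta>" if "h \<in> A" "h' \<in> A" "(y h \<ge> 0) = (y h' \<ge> 0)" for h h'
    proof -
      have hH: "h \<in> H" "h' \<in> H" and gg: "g h = j" "g h' = j" using that unfolding A_def by auto
      have "\<bar>\<bar>y h\<bar> / \<delta> - \<bar>y h'\<bar> / \<delta>\<bar> < 1"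
        using gfl[OF hH(1)] gfl[OF hH(2)] gg by linarith
      then have "\<bar>\<bar>y h\<bar> - \<bar>y h'\<bar>\<bar> < \<delta>" using \<delta> 
        by (simp add: diff_divide_distrib[symmetric] abs_divide field_simps)
      then show ?thesis using that(3) by (cases "y h \<ge> 0") auto
    qed
    have "card Ap \<le> Suc 0" unfolding card_le_Suc0_iff_eq[OF finA(1)]
    proof (intro ballI)
      fix a1 a2 assume "a1 \<in> Ap" "a2 \<in> Ap"
      then show "a1 = a2" using close[of a1 a2] sep[of a1 a2] unfolding Ap_def A_def by force
    qed
    moreover have "card An \<le> Suc 0" unfolding card_le_Suc0_iff_eq[OF finA(2)]
    proof (intro ballI)
      fix a1 a2 assume "a1 \<in> An" "a2 \<in> An"
      then show "a1 = a2" using close[of a1 a2] sep[of a1 a2] unfolding An_def A_def by force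
    qed
    moreover have "A = Ap \<union> An" unfolding Ap_def An_def by auto
    ultimately have "card A \<le> 2" using card_Un_le[of Ap An] by simp
    then show ?thesis unfolding A_def .
  qed
  have "(\<Sum>h\<in>H. 1 / \<bar>y h\<bar>) \<le> (\<Sum>h\<in>H. 1 / (\<delta> * real (g h)))"
  proof (rule sum_mono)
    fix h assume h: "h \<in> H"
    have "\<delta> * real (g h) \<le> \<bar>y h\<bar>" using gfl(1)[OF h] \<delta> by (simp add: field_simps)
    moreover have "\<delta> * real (g h) > 0" using g1[OF h] \<delta> by simp
    ultimately show "1 / \<bar>y h\<bar> \<le> 1 / (\<delta> * real (g h))" 
      by (intro divide_left_mono) (auto intro: mult_pos_pos)
  qed
  also have "\<dots> = (\<Sum>j\<in>g ` H. \<Sum>h\<in>{h \<in> H. g h = j}. 1 / (\<delta> * real (g h)))"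
    by (rule sum.image_gen[OF fin])
  also have "\<dots> = (\<Sum>j\<in>g ` H. real (card {h \<in> H. g h = j}) * (1 / (\<delta> * real j)))"
    by (intro sum.cong refl) simp
  also have "\<dots> \<le> (\<Sum>j\<in>g ` H. 2 * (1 / (\<delta> * real j)))"
    using card2 \<delta> by (intro sum_mono mult_right_mono) auto
  also have "\<dots> \<le> (\<Sum>j\<in>{1..J}. 2 * (1 / (\<delta> * real j)))"
    using g1 gJ \<delta> by (intro sum_mono2) auto
  also have "\<dots> = (2 / \<delta>) * (\<Sum>j\<in>{1..J}. 1 / real j)"
    by (simp add: sum_distrib_left)
  finally show ?thesis unfolding J_def .
qed



lemma lowb:
  assumes c: "c > 0" and dio: "\<forall>(q::int) (p::int). q \<noteq> 0 \<longrightarrow> \<bar>real_of_int q\<bar> * \<bar>of_int q * \<alpha> - of_int p\<bar> \<ge> c"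
    and q: "q \<noteq> 0" "\<bar>real_of_int q\<bar> \<le> Q" and l: "real l \<ge> 1"
  shows "\<bar>of_int q * \<alpha> / real l - of_int m\<bar> \<ge> c / (Q * real l)"
proof -
  have qpos: "\<bar>real_of_int q\<bar> > 0" using q by simp
  have "\<bar>real_of_int q\<bar> * \<bar>of_int q * \<alpha> - of_int (m * int l)\<bar> \<ge> c" using dio q by blast
  then have "\<bar>of_int q * \<alpha> - of_int (m * int l)\<bar> \<ge> c / \<bar>real_of_int q\<bar>"
    using qpos by (simp add: field_simps)
  moreover have "c / \<bar>real_of_int q\<bar> \<ge> c / Q" using qpos q c by (intro divide_left_mono) auto
  ultimately have A: "\<bar>of_int q * \<alpha> - of_int (m * int l)\<bar> \<ge> c / Q" by linarith
  have "of_int q * \<alpha> / real l - of_int m = (of_int q * \<alpha> - of_int (m * int l)) / real l"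
    using l by (simp add: field_simps)
  then have "\<bar>of_int q * \<alpha> / real l - of_int m\<bar> = \<bar>of_int q * \<alpha> - of_int (m * int l)\<bar> / real l"
    using l by simp
  also have "\<dots> \<ge> (c / Q) / real l" using A l by (intro divide_right_mono) auto
  finally show ?thesis by simp
qed

lemma core:
  fixes \<alpha> :: real and k :: int and l L M :: nat
  assumes c: "c > 0" and dio: "\<forall>(q::int) (p::int). q \<noteq> 0 \<longrightarrow> \<bar>real_of_int q\<bar> * \<bar>of_int q * \<alpha> - of_int p\<bar> \<ge> c"
    and k: "k \<noteq> 0" and l: "l \<ge> 1" and L: "L \<ge> 1"
  shows "norm (\<Sum>i<L. ee (of_int k * \<alpha> / real l * (real (M+1+i))^2)) ^ 2
     \<le> real L + (16 * real L * \<bar>of_int k\<bar> * real l / c) * (1 + \<bar>ln c\<bar> + ln (real L * \<bar>of_int k\<bar> * real l))"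
proof -
  define \<theta> where "\<theta> = of_int k * \<alpha> / real l"
  define F where "F i = ee (\<theta> * (real (M+1+i))^2)" for i
  define K where "K = \<bar>real_of_int k\<bar>"
  have K1: "K \<ge> 1" using k unfolding K_def by linarith
  have l1: "real l \<ge> 1" using l by simp
  have L1: "real L \<ge> 1" using L by simp
  define \<beta> where "\<beta> h = of_int (2 * int h * k) * \<alpha> / real l" for h
  define y where "y h = \<beta> h - of_int (round (\<beta> h))" for h
  define \<delta> where "\<delta> = c / (2 * real L * K * real l)"
  have \<delta>pos: "\<delta> > 0" unfolding \<delta>_def using c K1 l1 L1 by simp
  have ybnd: "\<delta> \<le> \<bar>y h\<bar> \<and> \<bar>y h\<bar> \<le> 1/2" if h: "h \<in> {1..<L}" for h
  proof
    have "\<bar>of_int (2 * int h * k) * \<alpha> / real l - of_int (round (\<beta> h))\<bar> \<ge> c / ((2 * real L * K) * real l)"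
    proof (rule lowb[OF c dio])
      show "2 * int h * k \<noteq> 0" using h k by auto
      have "\<bar>real_of_int (2 * int h * k)\<bar> = 2 * real h * K" unfolding K_def by (simp add: abs_mult)
      also have "\<dots> \<le> 2 * real L * K" using h K1 by (intro mult_right_mono) auto
      finally show "\<bar>real_of_int (2 * int h * k)\<bar> \<le> 2 * real L * K" .
    qed (use l1 in auto)
    then show "\<delta> \<le> \<bar>y h\<bar>" unfolding y_def \<delta>_def \<beta>_def by (simp add: mult_ac)
    show "\<bar>y h\<bar> \<le> 1/2" unfolding y_def using of_int_round_ge[of "\<beta> h"] of_int_round_le[of "\<beta> h"] by linarith
  qed
  have ysep: "\<delta> \<le> \<bar>y h - y h'\<bar>" if h: "h \<in> {1..<L}" "h' \<in> {1..<L}" "h \<noteq> h'" for h h'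
  proof -
    have "\<bar>of_int (2 * (int h - int h') * k) * \<alpha> / real l - of_int (round (\<beta> h) - round (\<beta> h'))\<bar> \<ge> c / ((2 * real L * K) * real l)"
    proof (rule lowb[OF c dio])
      show "2 * (int h - int h') * k \<noteq> 0" using h k by auto
      have "\<bar>real_of_int (2 * (int h - int h') * k)\<bar> = 2 * \<bar>real h - real h'\<bar> * K" 
      proof -
        have "\<bar>2 * real h - 2 * real h'\<bar> = 2 * \<bar>real h - real h'\<bar>" by (cases "real h \<ge> real h'") auto
        then show ?thesis unfolding K_def by (simp add: abs_mult)
      qed
      also have "\<dots> \<le> 2 * real L * K" using h K1 by (intro mult_right_mono) auto
      finally show "\<bar>real_of_int (2 * (int h - int h') * k)\<bar> \<le> 2 * real L * K" .
    qed (use l1 in auto)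
    moreover have "of_int (2 * (int h - int h') * k) * \<alpha> / real l - of_int (round (\<beta> h) - round (\<beta> h')) = y h - y h'"
      unfolding y_def \<beta>_def using l1 by (simp add: field_simps)
    ultimately show ?thesis unfolding \<delta>_def by (simp add: mult_ac)
  qed
  have inner: "norm (\<Sum>j<L-h. F (j+h) * cnj (F j)) \<le> 2 / \<bar>y h\<bar>" if h: "h \<in> {1..<L}" for h
  proof -
    define c0 where "c0 = \<theta> * (real h ^ 2 + 2 * real h * real (M+1))"
    have "F (j+h) * cnj (F j) = ee c0 * ee (\<beta> h * real j)" for j
    proof -
      have "F (j+h) * cnj (F j) = ee (\<theta> * (real (M+1+(j+h)))^2) * ee (- (\<theta> * (real (M+1+j))^2))"
        unfolding F_def by (simp only: cnj_ee)
      also have "\<dots> = ee (\<theta> * (real (M+1+(j+h)))^2 + - (\<theta> * (real (M+1+j))^2))"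
        by (rule ee_add[symmetric])
      also have "\<theta> * (real (M+1+(j+h)))^2 + - (\<theta> * (real (M+1+j))^2) = c0 + \<beta> h * real j"
      proof -
        have e1: "real (M+1+(j+h)) = real (M+1) + real j + real h" "real (M+1+j) = real (M+1) + real j" by simp_all
        have e2: "\<beta> h = 2 * \<theta> * real h" unfolding \<beta>_def \<theta>_def by simp
        have sq: "t * (a + b + hh)^2 + - (t * (a + b)^2) = t * (hh^2 + 2*hh*a) + (2*t*hh) * b" for t a b hh :: real
          by (simp add: power2_eq_square algebra_simps)
        show ?thesis unfolding e1 e2 c0_def by (rule sq)
      qed
      finally show ?thesis by (simp only: ee_add)
    qed
    then have "norm (\<Sum>j<L-h. F (j+h) * cnj (F j)) = norm (ee c0 * (\<Sum>j<L-h. ee (\<beta> h * real j)))"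
      by (simp add: sum_distrib_left)
    also have "\<dots> = norm (\<Sum>j<L-h. ee (\<beta> h * real j))" by (simp add: norm_mult)
    also have "\<dots> \<le> 2 / \<bar>y h\<bar>"
      by (rule geom_bound[OF y_def]) (use ybnd[OF h] \<delta>pos in auto)
    finally show ?thesis .
  qed
  have W: "norm (\<Sum>i<L. F i) ^ 2 \<le> real L + 2 * (\<Sum>h\<in>{1..<L}. norm (\<Sum>j<L-h. F (j+h) * cnj (F j)))"
    by (rule weyl_bound) (simp add: F_def ee_mult_cnj)
  have S1: "(\<Sum>h\<in>{1..<L}. norm (\<Sum>j<L-h. F (j+h) * cnj (F j))) \<le> 2 * (\<Sum>h\<in>{1..<L}. 1 / \<bar>y h\<bar>)"
  proof -
    have "(\<Sum>h\<in>{1..<L}. norm (\<Sum>j<L-h. F (j+h) * cnj (F j))) \<le> (\<Sum>h\<in>{1..<L}. 2 * (1 / \<bar>y h\<bar>))"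
      using inner by (intro sum_mono) simp
    then show ?thesis by (simp add: sum_distrib_left)
  qed
  have S2: "(\<Sum>h\<in>{1..<L}. 1 / \<bar>y h\<bar>) \<le> (2 / \<delta>) * (\<Sum>j\<in>{1..nat \<lfloor>1 / (2*\<delta>)\<rfloor>}. 1 / real j)"
  proof (rule spacing_sum)
    show "finite {1..<L}" by simp
    show "\<delta> > 0" by (rule \<delta>pos)
    show "\<delta> \<le> \<bar>y h\<bar> \<and> \<bar>y h\<bar> \<le> 1/2" if "h \<in> {1..<L}" for h using ybnd[OF that] .
    show "\<delta> \<le> \<bar>y h - y h'\<bar>" if "h \<in> {1..<L}" "h' \<in> {1..<L}" "h \<noteq> h'" for h h'
      using ysep[OF that] .
  qed
  have S3: "(\<Sum>j\<in>{1..nat \<lfloor>1 / (2*\<delta>)\<rfloor>}. 1 / real j) \<le> 1 + \<bar>ln c\<bar> + ln (real L * K * real l)"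
  proof -
    define J where "J = nat \<lfloor>1 / (2*\<delta>)\<rfloor>"
    have "1 * 1 \<le> real L * K" using L1 K1 by (intro mult_mono) auto
    then have "1 * 1 \<le> (real L * K) * real l" using l1 by (intro mult_mono) auto
    then have X1: "real L * K * real l \<ge> 1" by simp
    show ?thesis
    proof (cases "J \<ge> 1")
      case False
      then have "J = 0" by simp
      then show ?thesis unfolding J_def[symmetric] using X1 by simp
    next
      case True
      have "0 \<le> 1 / (2*\<delta>)" using \<delta>pos by simp
      then have "real J = of_int \<lfloor>1 / (2*\<delta>)\<rfloor>" unfolding J_def by simp
      then have "real J \<le> 1 / (2*\<delta>)" using of_int_floor_le[of "1 / (2*\<delta>)"] by linarith
      also have "\<dots> = real L * K * real l / c" unfolding \<delta>_def using c by (simp add: field_simps)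
      finally have Jb: "real J \<le> real L * K * real l / c" .
      have "ln (real J) \<le> ln (real L * K * real l / c)" using True Jb by (subst ln_le_cancel_iff) auto
      also have "\<dots> = ln (real L * K * real l) - ln c" using c X1 K1 L l by (simp add: ln_div)
      finally have "ln (real J) \<le> ln (real L * K * real l) + \<bar>ln c\<bar>" by linarith
      then show ?thesis using harm_bound[OF True] unfolding J_def by linarith
    qed
  qed
  define G where "G = 1 + \<bar>ln c\<bar> + ln (real L * K * real l)"
  have "(2 / \<delta>) * (\<Sum>j\<in>{1..nat \<lfloor>1 / (2*\<delta>)\<rfloor>}. 1 / real j) \<le> (2 / \<delta>) * G"
    unfolding G_def using S3 \<delta>pos by (intro mult_left_mono) auto
  then have "norm (\<Sum>i<L. F i) ^ 2 \<le> real L + 2 * (2 * ((2 / \<delta>) * G))"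
    using W S1 S2 by linarith
  also have "2 * (2 * ((2 / \<delta>) * G)) = (16 * real L * K * real l / c) * G"
    unfolding \<delta>_def using c by (simp add: field_simps)
  finally show ?thesis unfolding F_def \<theta>_def K_def G_def .
qed



theorem lemma5p1:
  fixes \<alpha> :: real
  assumes "badly_approximable \<alpha>"
  shows "\<forall>\<epsilon>>0. \<exists>C>0. \<forall>(k::int) (l::nat) (M::nat) (N::nat).
           k \<noteq> 0 \<longrightarrow> l \<ge> 1 \<longrightarrow> M < N \<longrightarrow>
           cmod (\<Sum>n=M+1..N. exp (2 * pi * \<i> * of_real (real_of_int k * \<alpha> * (real n)^2 / real l)))
             \<le> C * real (N - M) powr (1/2 + \<epsilon>) * \<bar>real_of_int k\<bar> powr (1/2 + \<epsilon>) * real l powr (1/2)"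
proof (intro allI impI)
  fix \<epsilon> :: real assume \<epsilon>: "\<epsilon> > 0"
  obtain c where c: "c > 0" and dio: "\<forall>(q::int) (p::int). q \<noteq> 0 \<longrightarrow> \<bar>real_of_int q\<bar> * \<bar>of_int q * \<alpha> - of_int p\<bar> \<ge> c"
    using badly_dioph[OF assms] by blast
  define A where "A = 1 + \<bar>ln c\<bar> + 1 / \<epsilon>"
  define D where "D = 1 + 16 * A / c"
  define C where "C = sqrt D"
  have A1: "A \<ge> 1" unfolding A_def using \<epsilon> by simp
  have D1: "D \<ge> 1" unfolding D_def using A1 c by simp
  have C0: "C > 0" unfolding C_def using D1 by simp
  show "\<exists>C>0. \<forall>(k::int) (l::nat) (M::nat) (N::nat).
           k \<noteq> 0 \<longrightarrow> l \<ge> 1 \<longrightarrow> M < N \<longrightarrow>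
           cmod (\<Sum>n=M+1..N. exp (2 * pi * \<i> * of_real (real_of_int k * \<alpha> * (real n)^2 / real l)))
             \<le> C * real (N - M) powr (1/2 + \<epsilon>) * \<bar>real_of_int k\<bar> powr (1/2 + \<epsilon>) * real l powr (1/2)"
  proof (intro exI[of _ C] conjI allI impI)
    show "C > 0" by (rule C0)
    fix k :: int and l M N :: nat
    assume k: "k \<noteq> 0" and l: "l \<ge> 1" and MN: "M < N"
    define L where "L = N - M"
    define K where "K = \<bar>real_of_int k\<bar>"
    have L: "L \<ge> 1" unfolding L_def using MN by simp
    have L1: "real L \<ge> 1" using L by simp
    have K1: "K \<ge> 1" using k unfolding K_def by linarith
    have l1: "real l \<ge> 1" using l by simp
    define S where "S = (\<Sum>n=M+1..N. exp (2 * pi * \<i> * of_real (real_of_int k * \<alpha> * (real n)^2 / real l)))"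
    have Seq: "S = (\<Sum>i<L. ee (of_int k * \<alpha> / real l * (real (M+1+i))^2))"
    proof -
      have "S = (\<Sum>n=M+1..N. ee (of_int k * \<alpha> / real l * (real n)^2))"
        unfolding S_def ee_exp by (simp add: mult_ac)
      also have "\<dots> = (\<Sum>i<L. ee (of_int k * \<alpha> / real l * (real (M+1+i))^2))"
        by (rule sum.reindex_bij_witness[of _ "\<lambda>i. M+1+i" "\<lambda>n. n - (M+1)"]) (auto simp: L_def)
      finally show ?thesis .
    qed
    define P where "P = real L powr (1/2 + \<epsilon>) * K powr (1/2 + \<epsilon>) * real l powr (1/2)"
    define R where "R = real L powr (1 + 2*\<epsilon>) * K powr (1 + 2*\<epsilon>) * real l"
    have PR: "P ^ 2 = R"
    proof -
      have "P ^ 2 = (real L powr (1/2 + \<epsilon>) * real L powr (1/2 + \<epsilon>)) * (K powr (1/2 + \<epsilon>) * K powr (1/2 + \<epsilon>))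
          * (real l powr (1/2) * real l powr (1/2))" unfolding P_def by (simp add: power2_eq_square mult_ac)
      also have "\<dots> = real L powr (1 + 2*\<epsilon>) * K powr (1 + 2*\<epsilon>) * real l powr 1"
        by (simp only: powr_add[symmetric]) simp
      finally show ?thesis unfolding R_def using l1 by simp
    qed
    have P0: "P \<ge> 0" unfolding P_def by simp
    have RL: "R \<ge> real L * real l"
    proof -
      have "real L powr 1 \<le> real L powr (1 + 2*\<epsilon>)" using \<epsilon> L1 by (intro powr_mono) auto
      then have a: "real L \<le> real L powr (1 + 2*\<epsilon>)" using L1 by simp
      have b: "1 \<le> K powr (1 + 2*\<epsilon>)" using K1 \<epsilon> by (intro ge_one_powr_ge_zero) auto
      have "real L * 1 \<le> real L powr (1 + 2*\<epsilon>) * K powr (1 + 2*\<epsilon>)" using a b L1 by (intro mult_mono) auto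
      then show ?thesis unfolding R_def using l1 by (intro mult_right_mono) auto
    qed
    have R0: "R \<ge> 0" using RL L1 l1 by (smt (verit) mult_nonneg_nonneg)
    have main: "norm S ^ 2 \<le> D * R"
    proof (cases "l > L")
      case True
      have "norm S \<le> (\<Sum>i<L. norm (ee (of_int k * \<alpha> / real l * (real (M+1+i))^2)))"
        unfolding Seq by (rule norm_sum)
      then have nS: "norm S \<le> real L" by simp
      then have "norm S ^ 2 \<le> real L ^ 2" by (intro power_mono) auto
      also have "\<dots> \<le> real L * real l" unfolding power2_eq_square using True by (intro mult_left_mono) auto
      also have "\<dots> \<le> R" by (rule RL)
      also have "\<dots> \<le> D * R" using D1 R0 by (simp add: mult_le_cancel_right1)
      finally show ?thesis .
    next
      case False
      then have lL: "real l \<le> real L" by simp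
      have core': "norm S ^ 2 \<le> real L + (16 * real L * K * real l / c) * (1 + \<bar>ln c\<bar> + ln (real L * K * real l))"
        unfolding Seq K_def by (rule core[OF c dio k l L])
      define X where "X = real L * K"
      have X1: "X \<ge> 1" unfolding X_def using L1 K1 by (metis mult_mono' mult_1 zero_le_one)
      have lnb: "ln (real L * K * real l) \<le> X powr (2*\<epsilon>) / \<epsilon>"
      proof -
        have "ln (real L * K * real l) \<le> ln (X * X)"
        proof (subst ln_le_cancel_iff)
          show "0 < real L * K * real l" using L1 K1 l1 by simp
          show "0 < X * X" using X1 by simp
          have "real l \<le> real L * K" using lL K1 L1 by (metis mult_le_cancel_left1 order.trans less_le_not_le linorder_not_le zero_less_one)
          then show "real L * K * real l \<le> X * X" unfolding X_def using L1 K1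
            by (intro mult_left_mono) auto
        qed
        also have "\<dots> = 2 * ln X" using X1 by (simp add: ln_mult)
        also have "ln X \<le> X powr (2*\<epsilon>) / (2*\<epsilon>)" using X1 \<epsilon> by (intro ln_powr_bound) auto
        finally show ?thesis using \<epsilon> by (simp add: field_simps)
      qed
      have XP1: "X powr (2*\<epsilon>) \<ge> 1" using X1 \<epsilon> by (intro ge_one_powr_ge_zero) auto
      have G: "1 + \<bar>ln c\<bar> + ln (real L * K * real l) \<le> A * X powr (2*\<epsilon>)"
      proof -
        have "(1 + \<bar>ln c\<bar>) * 1 \<le> (1 + \<bar>ln c\<bar>) * X powr (2*\<epsilon>)" using XP1 by (intro mult_left_mono) auto
        then show ?thesis using lnb unfolding A_def by (simp add: field_simps)
      qed
      have XR: "real L * K * real l * X powr (2*\<epsilon>) = R"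
      proof -
        have "X powr (2*\<epsilon>) = real L powr (2*\<epsilon>) * K powr (2*\<epsilon>)" unfolding X_def
          using L1 K1 by (simp add: powr_mult)
        moreover have "real L * real L powr (2*\<epsilon>) = real L powr (1 + 2*\<epsilon>)" using L1 by (simp add: powr_add)
        moreover have "K * K powr (2*\<epsilon>) = K powr (1 + 2*\<epsilon>)" using K1 by (simp add: powr_add)
        ultimately show ?thesis unfolding R_def by (metis (no_types, lifting) mult.commute mult.left_commute)
      qed
      have "(16 * real L * K * real l / c) * (1 + \<bar>ln c\<bar> + ln (real L * K * real l))
            \<le> (16 * real L * K * real l / c) * (A * X powr (2*\<epsilon>))"
        using G c L1 K1 l1 by (intro mult_left_mono) auto
      also have "\<dots> = (16 * A / c) * (real L * K * real l * X powr (2*\<epsilon>))" by (simp add: field_simps)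
      also have "\<dots> = (16 * A / c) * R" using XR by simp
      finally have "norm S ^ 2 \<le> real L + (16 * A / c) * R" using core' by linarith
      moreover have "real L \<le> R" using RL l1 L1 by (smt (verit) mult_le_cancel_left1)
      ultimately show ?thesis unfolding D_def by (simp add: algebra_simps)
    qed
    have "norm S \<le> C * P"
    proof (rule power2_le_imp_le)
      show "norm S ^ 2 \<le> (C * P) ^ 2" using main D1 PR unfolding C_def by (simp add: power_mult_distrib)
      show "0 \<le> C * P" using C0 P0 by simp
    qed
    then show "cmod (\<Sum>n=M+1..N. exp (2 * pi * \<i> * of_real (real_of_int k * \<alpha> * (real n)^2 / real l)))
             \<le> C * real (N - M) powr (1/2 + \<epsilon>) * \<bar>real_of_int k\<bar> powr (1/2 + \<epsilon>) * real l powr (1/2)"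
      unfolding S_def P_def L_def K_def by (simp add: mult_ac)
  qed
qed

end
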